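(* Let $A \in \mathbb{R}^{m\times n}$ and $W \in \mathbb{R}^{q\times m}$ be matrices, and let $B^\sharp\colon \mathbb{R}^m\to\mathbb{R}^n$ be a fixed measurable map. Let $X$ be a random vector in $\mathbb{R}^n$ and $\Xi, N$ random vectors in $\mathbb{R}^m$, all with finite second moments, such that the triples $(X,\Xi,N)$ and $(X,N,\Xi)$ have the same joint distribution (for instance, $\Xi$ and $N$ i.i.d. and independent of $X$). Set $Y = AX + \Xi$ and $Z = Y + N$. Let $\mathcal{F}$ be the set of measurable functions $f\colon\mathbb{R}^n\to\mathbb{R}^n$ with $\mathbb{E}\|WA[f(B^\sharp(Z))]\|_2^2<\infty$. Then $$\operatorname*{argmin}_{f\in\mathcal{F}} \mathbb{E}\,\big\|WA[f\circ B^\sharp(Z)] - WAX\big\|_2^2 \;=\; \operatorname*{argmin}_{f\in\mathcal{F}} \mathbb{E}\,\big\|WA[f\circ B^\sharp(Z)] - W(2Y-Z)\big\|_2^2 .$$ More precisely, for every $f\in\mathcal{F}$, $$\mathbb{E}\|WA[f\circ B^\sharp(Z)] - W(2Y-Z)\|_2^2 = \mathbb{E}\|WA[f\circ B^\sharp(Z)] - WAX\|_2^2 - \mathbb{E}\|WAX\|_2^2 + \mathbb{E}\|W(2Y-Z)\|_2^2 .$$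
   Context: Model: $Y = AX+\Xi$ is the noisy measurement of the unknown image $X$ under the linear forward operator $A$ with additive noise $\Xi$; $Z = Y+N$ is "noisier" data obtained by adding an independent copy-type noise $N$. $\|\cdot\|_2$ is the Euclidean norm. *)

theory Defs
  imports "HOL-Probability.Probability"
begin

definition argmin_on :: "'a set \<Rightarrow> ('a \<Rightarrow> real) \<Rightarrow> 'a set" where
  "argmin_on S J = {f \<in> S. \<forall>g\<in>S. J f \<le> J g}"

end

theory Submission
  imports Defs
begin

lemma mv_meas[measurable (raw)]:
  fixes A :: "real^'n^'m"
  assumes "f \<in> borel_measurable M"
  shows "(\<lambda>x. A *v f x) \<in> borel_measurable M"
proof -
  have "(*v) A \<in> borel_measurable borel"
    by (intro borel_measurable_continuous_onI linear_continuous_on) simp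
  from measurable_compose[OF assms this] show ?thesis by (simp add: o_def)
qed

lemma fst_bm: "(fst :: ('a::second_countable_topology \<times> 'b::second_countable_topology) \<Rightarrow> 'a) \<in> borel_measurable borel"
  by (intro borel_measurable_continuous_onI continuous_intros)
lemma snd_bm: "(snd :: ('a::second_countable_topology \<times> 'b::second_countable_topology) \<Rightarrow> 'b) \<in> borel_measurable borel"
  by (intro borel_measurable_continuous_onI continuous_intros)

lemma sq_bound:
  fixes W :: "real^'m^'q"
  shows "\<exists>K\<ge>0. \<forall>x. (norm (W *v x))\<^sup>2 \<le> K * (norm x)\<^sup>2"
proof -
  obtain K where K: "K > 0" "\<And>x. norm (W *v x) \<le> norm x * K"
    using bounded_linear.pos_bounded[OF matrix_vector_mul_bounded_linear[of W]] by blast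
  have "(norm (W *v x))\<^sup>2 \<le> K\<^sup>2 * (norm x)\<^sup>2" for x
  proof -
    have "(norm (W *v x))\<^sup>2 \<le> (norm x * K)\<^sup>2"
      by (intro power_mono K(2)) simp
    then show ?thesis by (simp add: power_mult_distrib mult.commute)
  qed
  then show ?thesis by (intro exI[of _ "K\<^sup>2"]) auto
qed

lemma int_sq_lin:
  fixes W :: "real^'m^'q" and u :: "'w \<Rightarrow> real^'m"
  assumes [measurable]: "u \<in> borel_measurable M" and i: "integrable M (\<lambda>\<omega>. (norm (u \<omega>))\<^sup>2)"
  shows "integrable M (\<lambda>\<omega>. (norm (W *v u \<omega>))\<^sup>2)"
proof -
  obtain K where K: "K \<ge> 0" "\<And>x. (norm (W *v x))\<^sup>2 \<le> K * (norm x)\<^sup>2"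
    using sq_bound[of W] by blast
  show ?thesis
  proof (rule Bochner_Integration.integrable_bound[OF integrable_mult_right[OF i, of K]])
    show "AE x in M. norm ((norm (W *v u x))\<^sup>2) \<le> norm (K * (norm (u x))\<^sup>2)"
      using K by (auto simp: abs_mult)
  qed measurable
qed

lemma int_inner:
  fixes u v :: "'w \<Rightarrow> 'a::euclidean_space"
  assumes [measurable]: "u \<in> borel_measurable M" "v \<in> borel_measurable M"
    and iu: "integrable M (\<lambda>\<omega>. (norm (u \<omega>))\<^sup>2)" and iv: "integrable M (\<lambda>\<omega>. (norm (v \<omega>))\<^sup>2)"
  shows "integrable M (\<lambda>\<omega>. u \<omega> \<bullet> v \<omega>)"
    and "integrable M (\<lambda>\<omega>. (norm (u \<omega> + v \<omega>))\<^sup>2)"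
    and "integrable M (\<lambda>\<omega>. (norm (u \<omega> - v \<omega>))\<^sup>2)"
proof -
  have s: "integrable M (\<lambda>\<omega>. (norm (u \<omega>))\<^sup>2 + (norm (v \<omega>))\<^sup>2)"
    using iu iv by simp
  have s2: "integrable M (\<lambda>\<omega>. 2 * ((norm (u \<omega>))\<^sup>2 + (norm (v \<omega>))\<^sup>2))"
    using integrable_mult_right[OF s, of 2] by simp
  have ab: "2 * a * b \<le> a\<^sup>2 + b\<^sup>2" for a b :: real
    using zero_le_power2[of "a - b"] by (simp add: power2_diff)
  show "integrable M (\<lambda>\<omega>. u \<omega> \<bullet> v \<omega>)"
  proof (rule Bochner_Integration.integrable_bound[OF s])
    show "AE x in M. norm (u x \<bullet> v x) \<le> norm ((norm (u x))\<^sup>2 + (norm (v x))\<^sup>2)"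
    proof
      fix x
      have "\<bar>u x \<bullet> v x\<bar> \<le> norm (u x) * norm (v x)" by (rule Cauchy_Schwarz_ineq2)
      also have "\<dots> \<le> (norm (u x))\<^sup>2 + (norm (v x))\<^sup>2"
        using ab[of "norm (u x)" "norm (v x)"] mult_nonneg_nonneg[OF norm_ge_zero norm_ge_zero, of "u x" "v x"] by linarith
      finally show "norm (u x \<bullet> v x) \<le> norm ((norm (u x))\<^sup>2 + (norm (v x))\<^sup>2)" by simp
    qed
  qed measurable
  have tri: "(norm (a + b))\<^sup>2 \<le> 2 * ((norm a)\<^sup>2 + (norm b)\<^sup>2)" for a b :: 'a
  proof -
    have "(norm (a + b))\<^sup>2 \<le> (norm a + norm b)\<^sup>2"
      by (intro power_mono norm_triangle_ineq) simp
    also have "\<dots> \<le> 2 * ((norm a)\<^sup>2 + (norm b)\<^sup>2)"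
      using ab[of "norm a" "norm b"] by (simp add: power2_sum)
    finally show ?thesis .
  qed
  show "integrable M (\<lambda>\<omega>. (norm (u \<omega> + v \<omega>))\<^sup>2)"
  proof (rule Bochner_Integration.integrable_bound[OF s2])
    show "AE x in M. norm ((norm (u x + v x))\<^sup>2) \<le> norm (2 * ((norm (u x))\<^sup>2 + (norm (v x))\<^sup>2))"
      using tri by auto
  qed measurable
  show "integrable M (\<lambda>\<omega>. (norm (u \<omega> - v \<omega>))\<^sup>2)"
  proof (rule Bochner_Integration.integrable_bound[OF s2])
    show "AE x in M. norm ((norm (u x - v x))\<^sup>2) \<le> norm (2 * ((norm (u x))\<^sup>2 + (norm (v x))\<^sup>2))"
      using tri[of "u _" "- v _"] by auto
  qed measurable
qed

lemma pt_id:
  fixes g a p q :: "'a::real_inner"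
  shows "(norm (g - (a + p - q)))\<^sup>2 = (norm (g - a))\<^sup>2 - (norm a)\<^sup>2 + (norm (a + p - q))\<^sup>2 - 2 * (g \<bullet> p) + 2 * (g \<bullet> q)"
  by (simp add: power2_norm_eq_inner inner_diff_left inner_diff_right inner_add_left inner_add_right inner_commute algebra_simps)

lemma argmin_shift:
  assumes "\<forall>f\<in>S. J2 f = J1 f - c1 + c2"
  shows "argmin_on S J1 = argmin_on S J2"
  using assms unfolding argmin_on_def by auto

lemma int5:
  fixes f1 f2 f3 f4 f5 :: "'w \<Rightarrow> real"
  assumes "integrable M f1" "integrable M f2" "integrable M f3" "integrable M f4" "integrable M f5"
  shows "(\<integral>\<omega>. f1 \<omega> - f2 \<omega> + f3 \<omega> - 2 * f4 \<omega> + 2 * f5 \<omega> \<partial>M)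
    = (\<integral>\<omega>. f1 \<omega> \<partial>M) - (\<integral>\<omega>. f2 \<omega> \<partial>M) + (\<integral>\<omega>. f3 \<omega> \<partial>M) - 2 * (\<integral>\<omega>. f4 \<omega> \<partial>M) + 2 * (\<integral>\<omega>. f5 \<omega> \<partial>M)"
  using assms by simp

theorem theorem1:
  fixes M :: "'w measure"
    and A :: "real^'n^'m" and W :: "real^'m^'q"
    and Bs :: "real^'m \<Rightarrow> real^'n"
    and X :: "'w \<Rightarrow> real^'n" and Xi Nz :: "'w \<Rightarrow> real^'m"
    and Y Z :: "'w \<Rightarrow> real^'m"
    and F :: "(real^'n \<Rightarrow> real^'n) set"
  assumes "prob_space M"
    and "Bs \<in> borel_measurable borel"
    and "X \<in> borel_measurable M" and "Xi \<in> borel_measurable M" and "Nz \<in> borel_measurable M"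
    and "integrable M (\<lambda>\<omega>. (norm (X \<omega>))\<^sup>2)"
    and "integrable M (\<lambda>\<omega>. (norm (Xi \<omega>))\<^sup>2)"
    and "integrable M (\<lambda>\<omega>. (norm (Nz \<omega>))\<^sup>2)"
    and "distr M borel (\<lambda>\<omega>. (X \<omega>, Xi \<omega>, Nz \<omega>)) = distr M borel (\<lambda>\<omega>. (X \<omega>, Nz \<omega>, Xi \<omega>))"
    and "Y = (\<lambda>\<omega>. A *v X \<omega> + Xi \<omega>)"
    and "Z = (\<lambda>\<omega>. Y \<omega> + Nz \<omega>)"
    and "F = {f. f \<in> borel_measurable borel \<and>
                integrable M (\<lambda>\<omega>. (norm (W *v (A *v f (Bs (Z \<omega>)))))\<^sup>2)}"
  shows "argmin_on F (\<lambda>f. \<integral>\<omega>. (norm (W *v (A *v f (Bs (Z \<omega>))) - W *v (A *v X \<omega>)))\<^sup>2 \<partial>M)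
       = argmin_on F (\<lambda>f. \<integral>\<omega>. (norm (W *v (A *v f (Bs (Z \<omega>))) - W *v (2 *\<^sub>R Y \<omega> - Z \<omega>)))\<^sup>2 \<partial>M)
     \<and> (\<forall>f\<in>F.
          (\<integral>\<omega>. (norm (W *v (A *v f (Bs (Z \<omega>))) - W *v (2 *\<^sub>R Y \<omega> - Z \<omega>)))\<^sup>2 \<partial>M)
        = (\<integral>\<omega>. (norm (W *v (A *v f (Bs (Z \<omega>))) - W *v (A *v X \<omega>)))\<^sup>2 \<partial>M)
          - (\<integral>\<omega>. (norm (W *v (A *v X \<omega>)))\<^sup>2 \<partial>M)
          + (\<integral>\<omega>. (norm (W *v (2 *\<^sub>R Y \<omega> - Z \<omega>)))\<^sup>2 \<partial>M))"
  proof -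
  note P = assms(1)
  note [measurable] = assms(2-5)
  have Zm[measurable]: "Z \<in> borel_measurable M" unfolding assms(10,11) by measurable
  have Ym[measurable]: "Y \<in> borel_measurable M" unfolding assms(10) by measurable
  define a where "a = (\<lambda>\<omega>. W *v (A *v X \<omega>))"
  define p where "p = (\<lambda>\<omega>. W *v Xi \<omega>)"
  define q where "q = (\<lambda>\<omega>. W *v Nz \<omega>)"
  have am[measurable]: "a \<in> borel_measurable M" unfolding a_def by measurable
  have pm[measurable]: "p \<in> borel_measurable M" unfolding p_def by measurable
  have qm[measurable]: "q \<in> borel_measurable M" unfolding q_def by measurable
  have iAX: "integrable M (\<lambda>\<omega>. (norm (A *v X \<omega>))\<^sup>2)"
    by (rule int_sq_lin[OF assms(3) assms(6)])
  have ia: "integrable M (\<lambda>\<omega>. (norm (a \<omega>))\<^sup>2)" unfolding a_def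
    by (rule int_sq_lin[OF _ iAX]) measurable
  have ip: "integrable M (\<lambda>\<omega>. (norm (p \<omega>))\<^sup>2)" unfolding p_def
    by (rule int_sq_lin[OF assms(4) assms(7)])
  have iq: "integrable M (\<lambda>\<omega>. (norm (q \<omega>))\<^sup>2)" unfolding q_def
    by (rule int_sq_lin[OF assms(5) assms(8)])
  have iap: "integrable M (\<lambda>\<omega>. (norm (a \<omega> + p \<omega>))\<^sup>2)"
    by (rule int_inner(2)[OF am pm ia ip])
  have iapq: "integrable M (\<lambda>\<omega>. (norm (a \<omega> + p \<omega> - q \<omega>))\<^sup>2)"
    by (rule int_inner(3)[OF _ qm iap iq]) measurable
  have W2: "W *v (2 *\<^sub>R Y \<omega> - Z \<omega>) = a \<omega> + p \<omega> - q \<omega>" for \<omega>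
  proof -
    have "2 *\<^sub>R Y \<omega> - Z \<omega> = A *v X \<omega> + Xi \<omega> - Nz \<omega>"
      by (simp add: assms(10,11) algebra_simps scaleR_2)
    then show ?thesis
      by (simp add: a_def p_def q_def matrix_vector_right_distrib matrix_vector_mult_diff_distrib)
  qed
  have key: "\<forall>f\<in>F.
          (\<integral>\<omega>. (norm (W *v (A *v f (Bs (Z \<omega>))) - W *v (2 *\<^sub>R Y \<omega> - Z \<omega>)))\<^sup>2 \<partial>M)
        = (\<integral>\<omega>. (norm (W *v (A *v f (Bs (Z \<omega>))) - W *v (A *v X \<omega>)))\<^sup>2 \<partial>M)
          - (\<integral>\<omega>. (norm (W *v (A *v X \<omega>)))\<^sup>2 \<partial>M)
          + (\<integral>\<omega>. (norm (W *v (2 *\<^sub>R Y \<omega> - Z \<omega>)))\<^sup>2 \<partial>M)"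
  proof
    fix f assume "f \<in> F"
    then have fm[measurable]: "f \<in> borel_measurable borel"
      and ig: "integrable M (\<lambda>\<omega>. (norm (W *v (A *v f (Bs (Z \<omega>)))))\<^sup>2)"
      using assms(12) by auto
    define g where "g = (\<lambda>\<omega>. W *v (A *v f (Bs (Z \<omega>))))"
    have gm[measurable]: "g \<in> borel_measurable M" unfolding g_def by measurable
    have ig': "integrable M (\<lambda>\<omega>. (norm (g \<omega>))\<^sup>2)" using ig unfolding g_def .
    have iga: "integrable M (\<lambda>\<omega>. (norm (g \<omega> - a \<omega>))\<^sup>2)" by (rule int_inner(3)[OF gm am ig' ia])
    have igp: "integrable M (\<lambda>\<omega>. g \<omega> \<bullet> p \<omega>)" by (rule int_inner(1)[OF gm pm ig' ip])
    have igq: "integrable M (\<lambda>\<omega>. g \<omega> \<bullet> q \<omega>)" by (rule int_inner(1)[OF gm qm ig' iq])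
    define \<phi> where "\<phi> = (\<lambda>r::((real^'n) \<times> (real^'m) \<times> (real^'m)). (W *v (A *v f (Bs (A *v fst r + fst (snd r) + snd (snd r))))) \<bullet> (W *v fst (snd r)))"
    have \<phi>m: "\<phi> \<in> borel_measurable borel"
    proof -
      note [measurable] = measurable_compose[OF _ fst_bm] measurable_compose[OF _ snd_bm]
      have [measurable]: "(\<lambda>p::((real^'n) \<times> (real^'m) \<times> (real^'m)). fst p) \<in> borel_measurable borel"
         "(\<lambda>p::((real^'n) \<times> (real^'m) \<times> (real^'m)). snd p) \<in> borel_measurable borel" by (simp_all add: fst_bm snd_bm)
      show ?thesis unfolding \<phi>_def by measurable
    qed
    have T1: "(\<lambda>\<omega>. (X \<omega>, Xi \<omega>, Nz \<omega>)) \<in> measurable M borel"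
      by (intro borel_measurable_Pair assms)
    have T2: "(\<lambda>\<omega>. (X \<omega>, Nz \<omega>, Xi \<omega>)) \<in> measurable M borel"
      by (intro borel_measurable_Pair assms)
    have exch: "(\<integral>\<omega>. g \<omega> \<bullet> p \<omega> \<partial>M) = (\<integral>\<omega>. g \<omega> \<bullet> q \<omega> \<partial>M)"
    proof -
      have "(\<integral>\<omega>. g \<omega> \<bullet> p \<omega> \<partial>M) = (\<integral>\<omega>. \<phi> (X \<omega>, Xi \<omega>, Nz \<omega>) \<partial>M)"
        by (simp add: \<phi>_def g_def p_def assms(10,11) add.assoc)
      also have "\<dots> = integral\<^sup>L (distr M borel (\<lambda>\<omega>. (X \<omega>, Xi \<omega>, Nz \<omega>))) \<phi>"
        by (rule integral_distr[OF T1 \<phi>m, symmetric])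
      also have "\<dots> = integral\<^sup>L (distr M borel (\<lambda>\<omega>. (X \<omega>, Nz \<omega>, Xi \<omega>))) \<phi>"
        using assms(9) by simp
      also have "\<dots> = (\<integral>\<omega>. \<phi> (X \<omega>, Nz \<omega>, Xi \<omega>) \<partial>M)"
        by (rule integral_distr[OF T2 \<phi>m])
      also have "\<dots> = (\<integral>\<omega>. g \<omega> \<bullet> q \<omega> \<partial>M)"
      proof -
        have "Z \<omega> = A *v X \<omega> + Nz \<omega> + Xi \<omega>" for \<omega>
          by (simp add: assms(10,11) algebra_simps)
        then show ?thesis by (simp add: \<phi>_def g_def q_def)
      qed
      finally show ?thesis .
    qed
    have "(\<integral>\<omega>. (norm (g \<omega> - W *v (2 *\<^sub>R Y \<omega> - Z \<omega>)))\<^sup>2 \<partial>M)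
        = (\<integral>\<omega>. (norm (g \<omega> - a \<omega>))\<^sup>2 - (norm (a \<omega>))\<^sup>2 + (norm (a \<omega> + p \<omega> - q \<omega>))\<^sup>2
                 - 2 * (g \<omega> \<bullet> p \<omega>) + 2 * (g \<omega> \<bullet> q \<omega>) \<partial>M)"
      by (simp add: W2 pt_id)
    also have "\<dots> = (\<integral>\<omega>. (norm (g \<omega> - a \<omega>))\<^sup>2 \<partial>M) - (\<integral>\<omega>. (norm (a \<omega>))\<^sup>2 \<partial>M)
        + (\<integral>\<omega>. (norm (a \<omega> + p \<omega> - q \<omega>))\<^sup>2 \<partial>M) - 2 * (\<integral>\<omega>. g \<omega> \<bullet> p \<omega> \<partial>M) + 2 * (\<integral>\<omega>. g \<omega> \<bullet> q \<omega> \<partial>M)"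
      by (rule int5[OF iga ia iapq igp igq])
    also have "\<dots> = (\<integral>\<omega>. (norm (g \<omega> - a \<omega>))\<^sup>2 \<partial>M) - (\<integral>\<omega>. (norm (a \<omega>))\<^sup>2 \<partial>M)
        + (\<integral>\<omega>. (norm (W *v (2 *\<^sub>R Y \<omega> - Z \<omega>)))\<^sup>2 \<partial>M)"
      by (simp add: exch W2)
    finally show "(\<integral>\<omega>. (norm (W *v (A *v f (Bs (Z \<omega>))) - W *v (2 *\<^sub>R Y \<omega> - Z \<omega>)))\<^sup>2 \<partial>M)
        = (\<integral>\<omega>. (norm (W *v (A *v f (Bs (Z \<omega>))) - W *v (A *v X \<omega>)))\<^sup>2 \<partial>M)
          - (\<integral>\<omega>. (norm (W *v (A *v X \<omega>)))\<^sup>2 \<partial>M)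
          + (\<integral>\<omega>. (norm (W *v (2 *\<^sub>R Y \<omega> - Z \<omega>)))\<^sup>2 \<partial>M)"
      by (simp add: g_def a_def)
  qed
  have amin: "argmin_on F (\<lambda>f. \<integral>\<omega>. (norm (W *v (A *v f (Bs (Z \<omega>))) - W *v (A *v X \<omega>)))\<^sup>2 \<partial>M)
       = argmin_on F (\<lambda>f. \<integral>\<omega>. (norm (W *v (A *v f (Bs (Z \<omega>))) - W *v (2 *\<^sub>R Y \<omega> - Z \<omega>)))\<^sup>2 \<partial>M)"
    by (rule argmin_shift[of F _ _ "\<integral>\<omega>. (norm (W *v (A *v X \<omega>)))\<^sup>2 \<partial>M"
      "\<integral>\<omega>. (norm (W *v (2 *\<^sub>R Y \<omega> - Z \<omega>)))\<^sup>2 \<partial>M"]) (rule key)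
  show ?thesis by (rule conjI[OF amin key])
qed

end
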